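(* Let $K, L, N, Z$ be positive integers with $Z \ge 2$. Let $\Omega \subseteq \{0,1,\dots,N-1\}$ be arbitrary. Let $\{\mathbf{a}_i\}_{i=1}^K$ be a $(K,L,Z)$ zero-correlation zone (ZCZ) sequence set, where $\mathbf{a}_i=[a^i_0,\dots,a^i_{L-1}]^{\mathrm T}$ and every entry satisfies $|a^i_l|=1$. For $1\le i\le K$ let $\mathbf{B}_i=[B^i_0,\dots,B^i_{N-1}]^{\mathrm T}\in\mathbb{C}^N$ be arbitrary with $B^i_k=0$ for all $k\in\Omega$, let $\mathbf{b}_i=\mathcal{F}_N^{\mathrm H}\mathbf{B}_i$, and define the length-$NL$ sequence $\mathbf{c}_i=\mathbf{a}_i\otimes\mathbf{b}_i$, i.e. the $(lN+n)$-th entry of $\mathbf{c}_i$ is $a^i_l\, b^i_n$ for $0\le l\le L-1$, $0\le n\le N-1$. Then: (1) for all $i\neq j$, $R_{\mathbf{c}_i,\mathbf{c}_j}(\tau)=0$ for all integers $\tau$ with $|\tau|<NZ-N$ (so $\{\mathbf{c}_i\}$ is a $(K,NL,NZ-N)$ quasi-ZCZ sequence set); (2) each $\mathbf{c}_i$ satisfies the spectrum hole constraint $\Omega$, in the sense that for each $0\le l\le L-1$ the $l$-th block $[c^i_{lN},\dots,c^i_{lN+N-1}]^{\mathrm T}=a^i_l\,\mathbf{b}_i$ has $N$-point DFT $a^i_l\mathbf{B}_i$, which vanishes at every position $k\in\Omega$; (3) for each $i$, $$R_{\mathbf{c}_i}(\tau)=\begin{cases} L\cdot C_{\mathbf{b}_i}(\tau),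 & |\tau|<N,\\ 0, & N\le|\tau|<NZ-N.\end{cases}$$
   Context: For length-$M$ complex sequences $\mathbf{x}=[x_0,\dots,x_{M-1}]^{\mathrm T}$, $\mathbf{y}=[y_0,\dots,y_{M-1}]^{\mathrm T}$, the periodic cross-correlation is $R_{\mathbf{x},\mathbf{y}}(\tau)=\sum_{n=0}^{M-1}x_n y^*_{n+\tau}$, with the index $n+\tau$ taken modulo $M$ (defined for all integers $\tau$); $R_{\mathbf{x}}(\tau):=R_{\mathbf{x},\mathbf{x}}(\tau)$. The aperiodic cross-correlation is $C_{\mathbf{x},\mathbf{y}}(\tau)=\sum_{n} x_n y^*_{n+\tau}$, the sum over those $n$ with $0\le n\le M-1$ and $0\le n+\tau\le M-1$ (so for $0\le\tau\le M-1$ it is $\sum_{n=0}^{M-1-\tau}x_ny^*_{n+\tau}$, and for negative $\tau$ it is $\sum_{n=-\tau}^{M-1}x_ny^*_{n+\tau}$); $C_{\mathbf{x}}(\tau):=C_{\mathbf{x},\mathbf{x}}(\tau)$. A set $\{\mathbf{a}_i\}_{i=1}^K$ of length-$L$ sequences is a $(K,L,Z)$ ZCZ sequence set if $R_{\mathbf{a}_i}(\tau)=0$ for all $i$ and all $1\le|\tau|<Z$, and $R_{\mathbf{a}_i,\mathbf{a}_j}(\tau)=0$ for all $i\ne j$ and all $0\le|\tau|<Z$; a set satisfying only the second (cross-correlation) condition is called a $(K,L,Z)$ quasi-ZCZ set. $\mathcal{F}_N=[f_{p,q}]_{p,q=0}^{N-1}$ with $f_{p,q}=\frac{1}{\sqrt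 N}e^{-2\pi\sqrt{-1}\,pq/N}$ is the unitary DFT matrix, and $\mathcal{F}_N^{\mathrm H}$ its conjugate transpose (the IDFT). $\Omega$ is the set of unavailable subcarrier positions ("spectrum hole constraint"). *)

theory Defs
  imports Complex_Main
begin

text \<open>Sequences of length M are functions nat => complex; only indices 0..M-1 matter.\<close>

definition percorr :: "nat \<Rightarrow> (nat \<Rightarrow> complex) \<Rightarrow> (nat \<Rightarrow> complex) \<Rightarrow> int \<Rightarrow> complex" where
  "percorr M x y \<tau> = (\<Sum>n<M. x n * cnj (y (nat ((int n + \<tau>) mod int M))))"

definition apercorr :: "nat \<Rightarrow> (nat \<Rightarrow> complex) \<Rightarrow> (nat \<Rightarrow> complex) \<Rightarrow> int \<Rightarrow> complex" where
  "apercorr M x y \<tau> =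
     (\<Sum>n\<in>{n. n < M \<and> 0 \<le> int n + \<tau> \<and> int n + \<tau> < int M}. x n * cnj (y (nat (int n + \<tau>))))"

definition zcz_set :: "nat \<Rightarrow> nat \<Rightarrow> nat \<Rightarrow> (nat \<Rightarrow> nat \<Rightarrow> complex) \<Rightarrow> bool" where
  "zcz_set K L Z a \<longleftrightarrow>
     (\<forall>i\<in>{1..K}. \<forall>\<tau>::int. 1 \<le> \<bar>\<tau>\<bar> \<and> \<bar>\<tau>\<bar> < int Z \<longrightarrow> percorr L (a i) (a i) \<tau> = 0) \<and>
     (\<forall>i\<in>{1..K}. \<forall>j\<in>{1..K}. i \<noteq> j \<longrightarrow>
        (\<forall>\<tau>::int. \<bar>\<tau>\<bar> < int Z \<longrightarrow> percorr L (a i) (a j) \<tau> = 0))"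

definition quasi_zcz_set :: "nat \<Rightarrow> nat \<Rightarrow> nat \<Rightarrow> (nat \<Rightarrow> nat \<Rightarrow> complex) \<Rightarrow> bool" where
  "quasi_zcz_set K L Z a \<longleftrightarrow>
     (\<forall>i\<in>{1..K}. \<forall>j\<in>{1..K}. i \<noteq> j \<longrightarrow>
        (\<forall>\<tau>::int. \<bar>\<tau>\<bar> < int Z \<longrightarrow> percorr L (a i) (a j) \<tau> = 0))"

definition dft :: "nat \<Rightarrow> (nat \<Rightarrow> complex) \<Rightarrow> nat \<Rightarrow> complex" where
  "dft N x p = (\<Sum>q<N. (1 / sqrt (real N)) * exp (- 2 * pi * \<i> * of_nat (p * q) / of_nat N) * x q)"

definition idft :: "nat \<Rightarrow> (nat \<Rightarrow> complex) \<Rightarrow> nat \<Rightarrow> complex" where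
  "idft N X q = (\<Sum>p<N. (1 / sqrt (real N)) * exp (2 * pi * \<i> * of_nat (p * q) / of_nat N) * X p)"

end

theory Submission imports Defs begin

lemma sum_blocks: "(\<Sum>m<N*L. (f::nat\<Rightarrow>'a::comm_monoid_add) m) = (\<Sum>l<L. \<Sum>n<N. f (l*N+n))"
proof -
  have "(\<Sum>m<N*L. f m) = (\<Sum>l<L. sum f {l*N..<l*N+N})"
    using sum.nat_group[of f N L] by (simp add: mult.commute)
  also have "\<dots> = (\<Sum>l<L. \<Sum>n<N. f (l*N+n))"
  proof (rule sum.cong[OF refl])
    fix l
    show "sum f {l*N..<l*N+N} = (\<Sum>n<N. f (l*N+n))"
      using sum.shift_bounds_nat_ivl[of f 0 "l*N" N] by (simp add: atLeast0LessThan add.commute)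
  qed
  finally show ?thesis .
qed

lemma mod_block:
  fixes A w :: int and N L :: nat
  assumes "0 \<le> w" "w < int N" "L > 0"
  shows "(A * int N + w) mod (int N * int L) = (A mod int L) * int N + w"
proof -
  have e0: "A * int N = ((A div int L) * int L + A mod int L) * int N" by simp
  have e: "A * int N + w = (A div int L) * (int N * int L) + ((A mod int L) * int N + w)"
  proof -
    have g: "(qq * int L + mm) * int N + w = qq * (int N * int L) + (mm * int N + w)" for qq mm :: int
      by (simp add: algebra_simps)
    show ?thesis by (subst e0) (rule g)
  qed
  have b1: "0 \<le> (A mod int L) * int N + w" using assms by simp
  have "(A mod int L) * int N + w \<le> (int L - 1) * int N + w"
    using assms by (intro add_right_mono mult_right_mono) auto
  also have "\<dots> < int N * int L" using assms by (simp add: algebra_simps)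
  finally have b2: "(A mod int L) * int N + w < int N * int L" .
  have "(A * int N + w) mod (int N * int L) = ((A mod int L) * int N + w) mod (int N * int L)"
    by (subst e, rule mod_mult_self3)
  also have "\<dots> = (A mod int L) * int N + w" using b1 b2 by (rule mod_pos_pos_trivial)
  finally show ?thesis .
qed

lemma orth:
  assumes "p < N" "k < N"
  shows "(\<Sum>q<N. exp (2 * pi * \<i> * of_nat (p * q) / of_nat N) * exp (- 2 * pi * \<i> * of_nat (k * q) / of_nat N))
     = (if p = k then of_nat N else 0)"
proof -
  define \<omega> where "\<omega> = cis (2 * pi * (real p - real k) / real N)"
  have t: "exp (2 * pi * \<i> * of_nat (p * q) / of_nat N) * exp (- 2 * pi * \<i> * of_nat (k * q) / of_nat N) = \<omega> ^ q" for q
  proof -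
    have "\<omega> ^ q = cis (real q * (2 * pi * (real p - real k) / real N))"
      by (simp only: \<omega>_def DeMoivre)
    also have "\<dots> = exp (\<i> * complex_of_real (real q * (2 * pi * (real p - real k) / real N)))"
      by (simp only: cis_conv_exp)
    also have "\<dots> = exp (2 * pi * \<i> * of_nat (p * q) / of_nat N + (- 2 * pi * \<i> * of_nat (k * q) / of_nat N))"
      using assms by (intro arg_cong[where f=exp]) (simp add: field_simps)
    finally show ?thesis by (metis exp_add)
  qed
  have S: "(\<Sum>q<N. exp (2 * pi * \<i> * of_nat (p * q) / of_nat N) * exp (- 2 * pi * \<i> * of_nat (k * q) / of_nat N)) = (\<Sum>q<N. \<omega> ^ q)"
    by (intro sum.cong refl t)
  show ?thesis
  proof (cases "p = k")
    case True
    then have "\<omega> = 1" by (simp add: \<omega>_def)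
    then show ?thesis using True S by simp
  next
    case False
    have "\<omega> \<noteq> 1"
    proof
      assume "\<omega> = 1"
      then have "cos (2 * pi * (real p - real k) / real N) = 1"
        by (simp add: \<omega>_def complex_eq_iff)
      then obtain m :: int where m: "2 * pi * (real p - real k) / real N = of_int m * 2 * pi"
        by (auto simp: cos_one_2pi_int)
      have h: "2 * pi * (real p - real k - of_int m * real N) = 0" using m assms by (simp add: field_simps)
      then have "real p - real k - of_int m * real N = 0" by simp
      then have "real p - real k = of_int m * real N" by simp
      then have e: "int p - int k = m * int N"
        by (metis of_int_eq_iff of_int_diff of_int_mult of_int_of_nat_eq)
      have "\<bar>int p - int k\<bar> < int N" using assms by simp
      then have "\<bar>m\<bar> * int N < 1 * int N" using e by (simp add: abs_mult)
      then have "\<bar>m\<bar> < 1" using mult_right_less_imp_less[of "\<bar>m\<bar>" "int N" 1] by simp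
      then have "m = 0" by simp
      then have "int p - int k = m * int N" using e by simp
      then show False using False \<open>m = 0\<close> by simp
    qed
    have "\<omega> ^ N = cis (2 * pi * (real p - real k))" using assms by (simp add: \<omega>_def DeMoivre)
    also have "\<dots> = 1"
    proof -
      have "real p - real k = of_int (int p - int k)" by simp
      moreover have "of_int (int p - int k) \<in> (\<int> :: real set)" by (rule Ints_of_int)
      ultimately show ?thesis by (metis cis_multiple_2pi)
    qed
    finally have "(\<Sum>q<N. \<omega> ^ q) = 0" using \<open>\<omega> \<noteq> 1\<close> by (simp add: geometric_sum)
    then show ?thesis using False S by simp
  qed
qed

lemma dft_idft:
  assumes "k < N"
  shows "dft N (idft N X) k = X k"
proof -
  define c :: complex where "c = complex_of_real (1 / sqrt (real N))"
  define e where "e = (\<lambda>p q. exp (2 * pi * \<i> * of_nat (p * q) / of_nat N) * exp (- 2 * pi * \<i> * of_nat (k * q) / of_nat N))"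
  have N: "N > 0" using assms by simp
  have cc: "c * c = 1 / of_nat N"
    using N by (simp add: c_def flip: of_real_mult)
  have eo: "(\<Sum>q<N. e p q) = (if p = k then of_nat N else 0)" if "p < N" for p
    unfolding e_def using that assms by (rule orth)
  have "dft N (idft N X) k = (\<Sum>q<N. \<Sum>p<N. (c*c) * X p * e p q)"
    unfolding dft_def idft_def c_def e_def
    by (simp add: sum_distrib_left mult_ac)
  also have "\<dots> = (\<Sum>p<N. (c*c) * X p * (\<Sum>q<N. e p q))"
    by (subst sum.swap) (simp add: sum_distrib_left)
  also have "\<dots> = (\<Sum>p<N. (c*c) * X p * (if p = k then of_nat N else 0))"
    by (intro sum.cong refl) (simp add: eo)
  also have "\<dots> = (c*c) * X k * of_nat N"
    using assms by (simp add: if_distrib sum.delta cong: if_cong)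
  also have "\<dots> = X k" using N cc by simp
  finally show ?thesis .
qed

lemma idx:
  fixes N L l n w :: nat and A \<tau> :: int
  assumes "N > 0" "L > 0" "w < N" "int (l*N+n) + \<tau> = (int l + A) * int N + int w"
  shows "nat ((int (l*N+n) + \<tau>) mod int (N*L)) div N = nat ((int l + A) mod int L)"
    and "nat ((int (l*N+n) + \<tau>) mod int (N*L)) mod N = w"
proof -
  define r where "r = nat ((int l + A) mod int L)"
  have "(int (l*N+n) + \<tau>) mod int (N*L) = ((int l + A) mod int L) * int N + int w"
    unfolding assms(4) using assms by (simp add: mod_block)
  also have "\<dots> = int (r * N + w)" using assms by (simp add: r_def)
  finally have e: "nat ((int (l*N+n) + \<tau>) mod int (N*L)) = r * N + w" by (metis nat_int)
  show "nat ((int (l*N+n) + \<tau>) mod int (N*L)) div N = nat ((int l + A) mod int L)"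
    unfolding e using assms by (simp add: r_def)
  show "nat ((int (l*N+n) + \<tau>) mod int (N*L)) mod N = w"
    unfolding e using assms by simp
qed

lemma corr_decomp:
  fixes x y p q :: "nat \<Rightarrow> complex" and N L :: nat and \<tau> :: int
  assumes N: "N > 0" and L: "L > 0"
  shows "percorr (N*L) (\<lambda>m. x (m div N) * p (m mod N)) (\<lambda>m. y (m div N) * q (m mod N)) \<tau>
   = (\<Sum>n<N. if n + nat (\<tau> mod int N) < N
        then percorr L x y (\<tau> div int N) * (p n * cnj (q (n + nat (\<tau> mod int N))))
        else percorr L x y (\<tau> div int N + 1) * (p n * cnj (q (n + nat (\<tau> mod int N) - N))))"
proof -
  define u where "u = \<tau> div int N"
  define v where "v = nat (\<tau> mod int N)"
  have tv: "\<tau> = u * int N + int v" using N by (simp add: u_def v_def)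
  have vN: "v < N" using N by (simp add: v_def nat_less_iff)
  define T where "T = (\<lambda>l n. if n + v < N
        then x l * cnj (y (nat ((int l + u) mod int L))) * (p n * cnj (q (n + v)))
        else x l * cnj (y (nat ((int l + (u+1)) mod int L))) * (p n * cnj (q (n + v - N))))"
  have "percorr (N*L) (\<lambda>m. x (m div N) * p (m mod N)) (\<lambda>m. y (m div N) * q (m mod N)) \<tau>
     = (\<Sum>l<L. \<Sum>n<N. T l n)"
    unfolding percorr_def sum_blocks
  proof (intro sum.cong refl)
    fix l n assume l: "l \<in> {..<L}" and n: "n \<in> {..<N}"
    have d1: "(l*N+n) div N = l" "(l*N+n) mod N = n" using n by auto
    show "x ((l * N + n) div N) * p ((l * N + n) mod N) *
         cnj (y (nat ((int (l * N + n) + \<tau>) mod int (N * L)) div N) *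
              q (nat ((int (l * N + n) + \<tau>) mod int (N * L)) mod N)) = T l n"
    proof (cases "n + v < N")
      case True
      have e: "int (l*N+n) + \<tau> = (int l + u) * int N + int (n+v)"
        unfolding tv by (simp add: algebra_simps)
      show ?thesis using idx[OF N L True e] True d1 by (simp add: T_def)
    next
      case False
      have w: "n + v - N < N" using n vN by auto
      have e: "int (l*N+n) + \<tau> = (int l + (u+1)) * int N + int (n+v-N)"
        unfolding tv using False by (simp add: algebra_simps of_nat_diff)
      show ?thesis using idx[OF N L w e] False d1 by (simp add: T_def)
    qed
  qed
  also have "\<dots> = (\<Sum>n<N. \<Sum>l<L. T l n)" by (rule sum.swap)
  also have "\<dots> = (\<Sum>n<N. if n + v < N
        then percorr L x y u * (p n * cnj (q (n + v)))
        else percorr L x y (u + 1) * (p n * cnj (q (n + v - N))))"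
    by (intro sum.cong refl) (simp add: T_def percorr_def sum_distrib_right)
  finally show ?thesis by (simp only: u_def v_def)
qed


lemma div_bounds:
  fixes \<tau> :: int and N Z :: nat
  assumes N: "N > 0" and Z: "Z \<ge> 2" and t: "\<bar>\<tau>\<bar> < int (N * Z - N)"
  shows "\<bar>\<tau> div int N\<bar> < int Z" "\<bar>\<tau> div int N + 1\<bar> < int Z"
proof -
  define u where "u = \<tau> div int N"
  define r where "r = \<tau> mod int N"
  have tv: "\<tau> = u * int N + r" by (simp add: u_def r_def)
  have r: "0 \<le> r" "r < int N" using N by (auto simp: r_def)
  have NZ: "int (N * Z - N) = int Z * int N - int N"
    using Z by (simp add: of_nat_diff algebra_simps)
  have t1: "\<tau> < int Z * int N - int N" "- (int Z * int N - int N) < \<tau>" proof -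
    have t': "\<bar>\<tau>\<bar> < int Z * int N - int N" using t by (simp only: NZ)
    show "\<tau> < int Z * int N - int N" "- (int Z * int N - int N) < \<tau>" using t' by (simp_all add: abs_less_iff)
  qed
  have "u * int N < (int Z - 1) * int N" using t1 tv r by (simp add: algebra_simps)
  then have u1: "u < int Z - 1" using N mult_right_less_imp_less of_nat_0_le_iff by blast
  have "(- int Z) * int N < u * int N" using t1 tv r by (simp add: algebra_simps)
  then have u2: "- int Z < u" using N mult_right_less_imp_less of_nat_0_le_iff by blast
  show "\<bar>\<tau> div int N\<bar> < int Z" "\<bar>\<tau> div int N + 1\<bar> < int Z"
    using u1 u2 by (auto simp: u_def[symmetric])
qed
lemma u_facts:
  fixes u r \<tau> :: int and N :: nat
  assumes N: "N > 0" and tv: "\<tau> = u * int N + r" and r: "0 \<le> r" "r < int N"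
  shows "int N \<le> \<bar>\<tau>\<bar> \<Longrightarrow> u \<noteq> 0"
    and "int N \<le> \<bar>\<tau>\<bar> \<Longrightarrow> r > 0 \<Longrightarrow> u + 1 \<noteq> 0"
    and "\<bar>\<tau>\<bar> < int N \<Longrightarrow> 0 \<le> \<tau> \<Longrightarrow> u = 0"
    and "\<bar>\<tau>\<bar> < int N \<Longrightarrow> \<tau> < 0 \<Longrightarrow> u = -1"
proof -
  show "int N \<le> \<bar>\<tau>\<bar> \<Longrightarrow> u \<noteq> 0" using tv r by auto
  show "int N \<le> \<bar>\<tau>\<bar> \<Longrightarrow> r > 0 \<Longrightarrow> u + 1 \<noteq> 0"
  proof
    assume "int N \<le> \<bar>\<tau>\<bar>" "r > 0" "u + 1 = 0"
    then have "u = -1" by simp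
    then have "\<tau> = r - int N" using tv by simp
    then show False using \<open>int N \<le> \<bar>\<tau>\<bar>\<close> \<open>r > 0\<close> r by auto
  qed
  have Np: "(0::int) \<le> int N" by simp
  show "\<bar>\<tau>\<bar> < int N \<Longrightarrow> 0 \<le> \<tau> \<Longrightarrow> u = 0"
  proof -
    assume a: "\<bar>\<tau>\<bar> < int N" "0 \<le> \<tau>"
    have "u * int N < 1 * int N" using a tv r by linarith
    then have "u < 1" using Np mult_right_less_imp_less by blast
    moreover have "(-1) * int N < u * int N" using a tv r by linarith
    then have "-1 < u" using Np mult_right_less_imp_less by blast
    ultimately show "u = 0" by simp
  qed
  show "\<bar>\<tau>\<bar> < int N \<Longrightarrow> \<tau> < 0 \<Longrightarrow> u = -1"
  proof -
    assume a: "\<bar>\<tau>\<bar> < int N" "\<tau> < 0"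
    have "u * int N < 0 * int N" using a tv r by linarith
    then have "u < 0" using Np mult_right_less_imp_less by blast
    moreover have "(-2) * int N < u * int N" using a tv r by linarith
    then have "-2 < u" using Np mult_right_less_imp_less by blast
    ultimately show "u = -1" by simp
  qed
qed

lemma P0:
  assumes "\<forall>l<L. cmod (x l) = 1"
  shows "percorr L x x 0 = of_nat L"
proof -
  have "percorr L x x 0 = (\<Sum>l<L. (1::complex))"
    unfolding percorr_def
  proof (intro sum.cong refl)
    fix l assume l: "l \<in> {..<L}"
    have "nat ((int l + 0) mod int L) = l" using l by (simp add: zmod_int)
    moreover have "x l * cnj (x l) = 1"
      using assms l complex_norm_square[of "x l"] by simp
    ultimately show "x l * cnj (x (nat ((int l + 0) mod int L))) = 1" by simp
  qed
  then show ?thesis by simp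
qed

theorem theorem1:
  fixes K L N Z :: nat
    and \<Omega> :: "nat set"
    and a B b c :: "nat \<Rightarrow> nat \<Rightarrow> complex"
  assumes "K > 0" "L > 0" "N > 0" "Z \<ge> 2"
    and "\<Omega> \<subseteq> {0..<N}"
    and "zcz_set K L Z a"
    and "\<forall>i\<in>{1..K}. \<forall>l<L. cmod (a i l) = 1"
    and "\<forall>i\<in>{1..K}. \<forall>k\<in>\<Omega>. B i k = 0"
    and "b = (\<lambda>i. idft N (B i))"
    and "c = (\<lambda>i m. a i (m div N) * b i (m mod N))"
  shows "(\<forall>i\<in>{1..K}. \<forall>j\<in>{1..K}. i \<noteq> j \<longrightarrow>
            (\<forall>\<tau>::int. \<bar>\<tau>\<bar> < int (N * Z - N) \<longrightarrow> percorr (N * L) (c i) (c j) \<tau> = 0))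
       \<and> quasi_zcz_set K (N * L) (N * Z - N) c
       \<and> (\<forall>i\<in>{1..K}. \<forall>l<L.
            (\<forall>k<N. dft N (\<lambda>n. c i (l * N + n)) k = a i l * B i k) \<and>
            (\<forall>k\<in>\<Omega>. dft N (\<lambda>n. c i (l * N + n)) k = 0))
       \<and> (\<forall>i\<in>{1..K}. \<forall>\<tau>::int.
            (\<bar>\<tau>\<bar> < int N \<longrightarrow> percorr (N * L) (c i) (c i) \<tau> = of_nat L * apercorr N (b i) (b i) \<tau>) \<and>
            (int N \<le> \<bar>\<tau>\<bar> \<and> \<bar>\<tau>\<bar> < int (N * Z - N) \<longrightarrow> percorr (N * L) (c i) (c i) \<tau> = 0))"
proof -
  have N: "N > 0" and L: "L > 0" and Z: "Z \<ge> 2" using assms by auto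
  have auto0: "percorr L (a i) (a i) t = 0" if "i \<in> {1..K}" "1 \<le> \<bar>t\<bar>" "\<bar>t\<bar> < int Z" for i t
    using assms(6) that unfolding zcz_set_def by blast
  have cross0: "percorr L (a i) (a j) t = 0" if "i \<in> {1..K}" "j \<in> {1..K}" "i \<noteq> j" "\<bar>t\<bar> < int Z" for i j t
    using assms(6) that unfolding zcz_set_def by blast
  have dec: "percorr (N*L) (c i) (c j) \<tau> = (\<Sum>n<N. if n + nat (\<tau> mod int N) < N
        then percorr L (a i) (a j) (\<tau> div int N) * (b i n * cnj (b j (n + nat (\<tau> mod int N))))
        else percorr L (a i) (a j) (\<tau> div int N + 1) * (b i n * cnj (b j (n + nat (\<tau> mod int N) - N))))"
    for i j \<tau>
    unfolding assms(10) by (rule corr_decomp[OF N L, where x="a i" and p="b i" and y="a j" and q="b j"])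
  have tv: "\<tau> = (\<tau> div int N) * int N + (\<tau> mod int N)" for \<tau> :: int by simp
  have rr: "0 \<le> \<tau> mod int N" "\<tau> mod int N < int N" for \<tau> :: int using N by auto
  have P1: "\<forall>i\<in>{1..K}. \<forall>j\<in>{1..K}. i \<noteq> j \<longrightarrow>
            (\<forall>\<tau>::int. \<bar>\<tau>\<bar> < int (N * Z - N) \<longrightarrow> percorr (N * L) (c i) (c j) \<tau> = 0)"
  proof (intro ballI impI allI)
    fix i j \<tau> assume i: "i \<in> {1..K}" and j: "j \<in> {1..K}" and ij: "i \<noteq> j"
      and t: "\<bar>\<tau>\<bar> < int (N * Z - N)"
    have "percorr L (a i) (a j) (\<tau> div int N) = 0" "percorr L (a i) (a j) (\<tau> div int N + 1) = 0"
      using cross0[OF i j ij] div_bounds[OF N Z t] by auto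
    then show "percorr (N * L) (c i) (c j) \<tau> = 0" unfolding dec by (intro sum.neutral) auto
  qed
  have P2: "quasi_zcz_set K (N * L) (N * Z - N) c"
    using P1 unfolding quasi_zcz_set_def by blast
  have blk: "dft N (\<lambda>n. c i (l * N + n)) k = a i l * B i k" if "k < N" for i l k
  proof -
    have "dft N (\<lambda>n. c i (l * N + n)) k = dft N (\<lambda>n. a i l * idft N (B i) n) k"
      unfolding dft_def by (intro sum.cong refl) (simp add: assms(9,10))
    also have "\<dots> = a i l * dft N (idft N (B i)) k"
      unfolding dft_def by (simp add: sum_distrib_left mult_ac)
    also have "\<dots> = a i l * B i k" using that by (simp add: dft_idft)
    finally show ?thesis .
  qed
  have P3: "\<forall>i\<in>{1..K}. \<forall>l<L.
            (\<forall>k<N. dft N (\<lambda>n. c i (l * N + n)) k = a i l * B i k) \<and>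
            (\<forall>k\<in>\<Omega>. dft N (\<lambda>n. c i (l * N + n)) k = 0)"
  proof (intro ballI allI impI conjI)
    fix i l k assume "i \<in> {1..K}" "k \<in> \<Omega>"
    then show "dft N (\<lambda>n. c i (l * N + n)) k = 0"
      using blk[of k i l] assms(5,8) by auto
  qed (simp add: blk)
  have P4: "\<forall>i\<in>{1..K}. \<forall>\<tau>::int.
            (\<bar>\<tau>\<bar> < int N \<longrightarrow> percorr (N * L) (c i) (c i) \<tau> = of_nat L * apercorr N (b i) (b i) \<tau>) \<and>
            (int N \<le> \<bar>\<tau>\<bar> \<and> \<bar>\<tau>\<bar> < int (N * Z - N) \<longrightarrow> percorr (N * L) (c i) (c i) \<tau> = 0)"
  proof (intro ballI allI conjI impI)
    fix i \<tau> assume i: "i \<in> {1..K}"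
    have p0: "percorr L (a i) (a i) 0 = of_nat L" using assms(7) i by (intro P0) auto
    have p1: "percorr L (a i) (a i) 1 = 0" "percorr L (a i) (a i) (-1) = 0"
      using auto0[OF i, of 1] auto0[OF i, of "-1"] Z by auto
    define v where "v = nat (\<tau> mod int N)"
    have vN: "v < N" using N by (simp add: v_def nat_less_iff)
    {
      assume t: "\<bar>\<tau>\<bar> < int N"
      show "percorr (N * L) (c i) (c i) \<tau> = of_nat L * apercorr N (b i) (b i) \<tau>"
      proof (cases "0 \<le> \<tau>")
        case True
        have u: "\<tau> div int N = 0" using u_facts(3)[OF N tv rr, of \<tau>] t True by simp
        then have tv': "\<tau> = int v" using tv[of \<tau>] rr[of \<tau>] by (simp add: v_def)
        have "percorr (N * L) (c i) (c i) \<tau> = (\<Sum>n<N. if n + v < N then of_nat L * (b i n * cnj (b i (n + v))) else 0)"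
          unfolding dec u v_def[symmetric] by (intro sum.cong refl) (simp add: p0 p1)
        also have "\<dots> = of_nat L * (\<Sum>n<N. if n + v < N then b i n * cnj (b i (n + v)) else 0)"
          by (simp add: sum_distrib_left if_distrib cong: if_cong)
        also have "(\<Sum>n<N. if n + v < N then b i n * cnj (b i (n + v)) else 0) = apercorr N (b i) (b i) \<tau>"
        proof -
          have S: "{n. n < N \<and> 0 \<le> int n + \<tau> \<and> int n + \<tau> < int N} = {n \<in> {..<N}. n + v < N}"
            using tv' by auto
          show ?thesis unfolding apercorr_def S sum.inter_filter[OF finite_lessThan]
            using tv' by (intro sum.cong refl) (simp add: nat_int_add)
        qed
        finally show ?thesis .
      next
        case False
        have u: "\<tau> div int N = -1" using u_facts(4)[OF N tv rr, of \<tau>] t False by simp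
        then have tv': "\<tau> = int v - int N" using tv[of \<tau>] rr[of \<tau>] by (simp add: v_def)
        have "percorr (N * L) (c i) (c i) \<tau> = (\<Sum>n<N. if n + v < N then 0 else of_nat L * (b i n * cnj (b i (n + v - N))))"
          unfolding dec u v_def[symmetric] by (intro sum.cong refl) (simp add: p0 p1)
        also have "\<dots> = of_nat L * (\<Sum>n<N. if n + v < N then 0 else b i n * cnj (b i (n + v - N)))"
          by (simp add: sum_distrib_left if_distrib cong: if_cong)
        also have "(\<Sum>n<N. if n + v < N then 0 else b i n * cnj (b i (n + v - N))) = apercorr N (b i) (b i) \<tau>"
        proof -
          have S: "{n. n < N \<and> 0 \<le> int n + \<tau> \<and> int n + \<tau> < int N} = {n \<in> {..<N}. \<not> (n + v < N)}"
            using tv' vN by auto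
          have e: "nat (int n + \<tau>) = n + v - N" if "\<not> (n + v < N)" for n
            using tv' that by auto
          show ?thesis unfolding apercorr_def S sum.inter_filter[OF finite_lessThan]
            by (intro sum.cong refl) (auto simp: e)
        qed
        finally show ?thesis .
      qed
    }
    {
      assume t: "int N \<le> \<bar>\<tau>\<bar> \<and> \<bar>\<tau>\<bar> < int (N * Z - N)"
      have u0: "\<tau> div int N \<noteq> 0" using u_facts(1)[OF N tv rr, of \<tau>] t by simp
      have u1: "\<tau> mod int N > 0 \<Longrightarrow> \<tau> div int N + 1 \<noteq> 0" using u_facts(2)[OF N tv rr, of \<tau>] t by simp
      have db: "\<bar>\<tau> div int N\<bar> < int Z" "\<bar>\<tau> div int N + 1\<bar> < int Z" using div_bounds[OF N Z] t by auto
      show "percorr (N * L) (c i) (c i) \<tau> = 0"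
        unfolding dec
      proof (intro sum.neutral ballI)
        fix n assume n: "n \<in> {..<N}"
        show "(if n + nat (\<tau> mod int N) < N
        then percorr L (a i) (a i) (\<tau> div int N) * (b i n * cnj (b i (n + nat (\<tau> mod int N))))
        else percorr L (a i) (a i) (\<tau> div int N + 1) * (b i n * cnj (b i (n + nat (\<tau> mod int N) - N)))) = 0"
        proof (cases "n + nat (\<tau> mod int N) < N")
          case True
          then show ?thesis using auto0[OF i, of "\<tau> div int N"] u0 db by simp
        next
          case False
          then have "\<tau> mod int N > 0" using n by auto
          then show ?thesis using False auto0[OF i, of "\<tau> div int N + 1"] u1 db by simp
        qed
      qed
    }
  qed
  show ?thesis using P1 P2 P3 P4 by blast
qed

end
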